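(* Let $S$ be a set of binary words all of the same length and the same weight, and let $\mathcal{L}$ be a list which is a homogeneous Gray code for $S$ and which is suffix partitioned. Then $\mathcal{L}$ is a recursive tail partitioned list.
   Context: The weight of a binary word is its number of 1's. Two binary words differ by a homogeneous transposition if one is obtained from the other by exchanging a 1 and a 0 such that no 1 occurs strictly between the two exchanged positions. A homogeneous Gray code for $S$ is a list containing each word of $S$ exactly once in which any two consecutive words differ by a homogeneous transposition. A list of binary words is suffix partitioned if, for every word $s$, the words of the list having $s$ as a suffix occupy consecutive positions in the list. The tail of a binary word is its unique suffix of the form $01^m$ ($m\ge 0$); the words $1^n$ have no tail. Notation: $\mathcal{A}\cdot w$ denotes the list obtained by appending the word $w$ to the end of each word of the list $\mathcal{A}$, and a comma denotes concatenation of lists. A list of same-length binary words is recursive tail partitioned if it is empty or consists of a single word, or if it has one of the forms $\mathcal{L}=\mathcal{L}_1\cdot 01^u,\ \mathcal{L}_2\cdot 01^{u+1},\ \dots,\ \mathcal{L}_{\ell+1}\cdot 01^{u+\ell}$ or $\mathcal{L}=\mathcal{L}_1\cdot 01^{u+\ell},\ \mathcal{L}_2\cdot 01^{u+\ell-1},\ \dots,\ \mathcal{L}_{\ell+1}\cdot 01^{u}$ for some integers $u,\ell\ge 0$, where each list $\mathcal{L}_i$ (possibly empty) is in turn recursive tail partitioned. (That is, words are grouped by tail, with tail lengths increasing or decreasing along the list, and the list obtained by deleting the common tail from each group is again of this kind.) *)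

theory Defs
  imports "HOL-Library.Sublist"
begin

text \<open>Binary words are lists of booleans, read left to right; True = 1, False = 0.\<close>

type_synonym word = "bool list"

definition weight :: "word \<Rightarrow> nat" where
  "weight w = length (filter id w)"

definition hom_transp :: "word \<Rightarrow> word \<Rightarrow> bool" where
  "hom_transp u v \<longleftrightarrow>
     (\<exists>i j. i < j \<and> j < length u \<and> u ! i \<noteq> u ! j \<and>
        (\<forall>k. i < k \<and> k < j \<longrightarrow> \<not> u ! k) \<and>
        v = u[i := u ! j, j := u ! i])"

definition hom_gray_code :: "word list \<Rightarrow> word set \<Rightarrow> bool" where
  "hom_gray_code L S \<longleftrightarrow>
     distinct L \<and> set L = S \<and>
     (\<forall>i. Suc i < length L \<longrightarrow> hom_transp (L ! i) (L ! Suc i))"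

definition suffix_partitioned :: "word list \<Rightarrow> bool" where
  "suffix_partitioned L \<longleftrightarrow>
     (\<forall>s i j k. i < k \<and> k < j \<and> j < length L \<and>
        suffix s (L ! i) \<and> suffix s (L ! j) \<longrightarrow> suffix s (L ! k))"

definition app_word :: "word list \<Rightarrow> word \<Rightarrow> word list" where
  "app_word A w = map (\<lambda>x. x @ w) A"

definition tail_word :: "nat \<Rightarrow> word" where
  "tail_word m = False # replicate m True"

inductive rec_tail_part :: "word list \<Rightarrow> bool" where
  rtp_nil: "rec_tail_part []"
| rtp_single: "rec_tail_part [w]"
| rtp_inc: "\<lbrakk> length Ls = Suc l; \<forall>i < length Ls. rec_tail_part (Ls ! i);
     L = concat (map (\<lambda>i. app_word (Ls ! i) (tail_word (u + i))) [0..<Suc l]);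
     \<forall>w \<in> set L. \<forall>w' \<in> set L. length w = length w' \<rbrakk> \<Longrightarrow> rec_tail_part L"
| rtp_dec: "\<lbrakk> length Ls = Suc l; \<forall>i < length Ls. rec_tail_part (Ls ! i);
     L = concat (map (\<lambda>i. app_word (Ls ! i) (tail_word (u + l - i))) [0..<Suc l]);
     \<forall>w \<in> set L. \<forall>w' \<in> set L. length w = length w' \<rbrakk> \<Longrightarrow> rec_tail_part L"

end

theory Submission
  imports Defs
begin



definition tl1 :: "word \<Rightarrow> nat" where
  "tl1 w = length (takeWhile id (rev w))"

lemma hom_transp_length: "hom_transp u v \<Longrightarrow> length v = length u"
  unfolding hom_transp_def by auto

lemma hom_transp_sym: "hom_transp u v \<Longrightarrow> hom_transp v u"
  unfolding hom_transp_def
proof (elim exE conjE)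
  fix i j assume *: "i < j" "j < length u" "u ! i \<noteq> u ! j"
    "\<forall>k. i < k \<and> k < j \<longrightarrow> \<not> u ! k" "v = u[i := u ! j, j := u ! i]"
  show "\<exists>i j. i < j \<and> j < length v \<and> v ! i \<noteq> v ! j \<and>
        (\<forall>k. i < k \<and> k < j \<longrightarrow> \<not> v ! k) \<and> u = v[i := v ! j, j := v ! i]"
    apply (rule exI[of _ i], rule exI[of _ j])
    using * by (auto simp: nth_list_update list_eq_iff_nth_eq)
qed

lemma tl1_less_iff: "tl1 w < length w \<longleftrightarrow> False \<in> set w"
proof -
  have "tl1 w \<le> length w" unfolding tl1_def by (metis length_rev length_takeWhile_le)
  moreover have "tl1 w = length w \<longleftrightarrow> takeWhile id (rev w) = rev w"
    unfolding tl1_def by (metis length_rev takeWhile_eq_take take_all_iff order_refl)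
  ultimately show ?thesis by auto
qed

lemma tl1_zero_pos: "tl1 w < length w \<Longrightarrow> \<not> w ! (length w - Suc (tl1 w))"
  unfolding tl1_def using nth_length_takeWhile[of id "rev w"]
  by (simp add: rev_nth)

lemma tl1_ones: "length w - tl1 w \<le> p \<Longrightarrow> p < length w \<Longrightarrow> w ! p"
proof -
  assume a: "length w - tl1 w \<le> p" "p < length w"
  define k where "k = length w - Suc p"
  have k: "k < length (takeWhile id (rev w))" using a unfolding k_def tl1_def by simp
  have "id (rev w ! k)"
    using takeWhile_nth[OF k] set_takeWhileD[OF nth_mem[OF k]] by simp
  thus ?thesis using a unfolding k_def by (simp add: rev_nth)
qed

lemma tl1_le: "p < length w \<Longrightarrow> \<not> w ! p \<Longrightarrow> length w \<le> p + 1 + m \<Longrightarrow> tl1 w \<le> m"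
  using tl1_ones[of w p] by (cases "length w - tl1 w \<le> p") auto

lemma tl1_decomp: "tl1 (p @ tail_word m) = m"
proof -
  have "rev (p @ tail_word m) = replicate m True @ (False # rev p)" by (simp add: tail_word_def)
  moreover have "takeWhile id (replicate m True @ (False # rev p)) = replicate m True"
    by (subst takeWhile_append2) auto
  ultimately show ?thesis unfolding tl1_def by simp
qed

lemma tl1_decomp2: "tl1 w < length w \<Longrightarrow> w = take (length w - Suc (tl1 w)) w @ tail_word (tl1 w)"
proof -
  assume a: "tl1 w < length w"
  let ?q = "length w - Suc (tl1 w)"
  have "drop ?q w = tail_word (tl1 w)"
    unfolding tail_word_def
  proof (rule nth_equalityI)
    show "length (drop ?q w) = length (False # replicate (tl1 w) True)" using a by simp
    fix i assume "i < length (drop ?q w)"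
    then show "drop ?q w ! i = (False # replicate (tl1 w) True) ! i"
      using a tl1_zero_pos[OF a] tl1_ones[of w "?q + i"]
      by (cases i) (auto simp: nth_Cons')
  qed
  thus ?thesis by (metis append_take_drop_id)
qed

lemma suffix_tail_iff: "suffix (tail_word m) w \<longleftrightarrow> tl1 w = m \<and> m < length w"
proof
  assume "suffix (tail_word m) w"
  then obtain p where "w = p @ tail_word m" by (auto simp: suffix_def)
  thus "tl1 w = m \<and> m < length w" using tl1_decomp[of p m] by (simp add: tail_word_def)
next
  assume "tl1 w = m \<and> m < length w"
  thus "suffix (tail_word m) w" using tl1_decomp2[of w] by (metis suffix_appendI suffix_order.refl)
qed

lemma hom_transp_zero: "hom_transp u v \<Longrightarrow> False \<in> set u"
  unfolding hom_transp_def by (metis (full_types) nth_mem order.strict_trans)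

lemma hom_transp_step: "hom_transp u v \<Longrightarrow> tl1 v \<le> tl1 u + 1"
proof -
  assume h: "hom_transp u v"
  have lv: "length v = length u" using hom_transp_length[OF h] .
  have tu: "tl1 u < length u" using hom_transp_zero[OF h] tl1_less_iff by blast
  from h obtain i j where *: "i < j" "j < length u" "u ! i \<noteq> u ! j"
    "\<forall>k. i < k \<and> k < j \<longrightarrow> \<not> u ! k" "v = u[i := u ! j, j := u ! i]"
    unfolding hom_transp_def by blast
  define q where "q = length u - Suc (tl1 u)"
  have q0: "\<not> u ! q" unfolding q_def using tl1_zero_pos[OF tu] .
  have qn: "q < length u" unfolding q_def using tu by simp
  have qq: "length u \<le> q + 1 + tl1 u" unfolding q_def using tu by simp
  show ?thesis
  proof (cases "q = i \<or> q = j")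
    case False
    then have "\<not> v ! q" using * q0 by (simp add: nth_list_update)
    then show ?thesis using tl1_le[of q v "tl1 u + 1"] qn qq lv by simp
  next
    case True
    then show ?thesis
    proof
      assume "q = i"
      then have "\<not> v ! j" using * q0 by (simp add: nth_list_update)
      then show ?thesis using tl1_le[of j v "tl1 u + 1"] * qq lv \<open>q = i\<close> by simp
    next
      assume qj: "q = j"
      show ?thesis
      proof (cases "i = j - 1")
        case True
        then have "\<not> v ! i" using * q0 qj by (auto simp: nth_list_update)
        then show ?thesis using tl1_le[of i v "tl1 u + 1"] * qq lv qj True by simp
      next
        case False
        then have "\<not> v ! (j - 1)" using * by (auto simp: nth_list_update)
        then show ?thesis using tl1_le[of "j - 1" v "tl1 u + 1"] * qq lv qj False by simp
      qed
    qed
  qed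
qed

lemma discrete_ivt0:
  fixes g :: "nat \<Rightarrow> int"
  assumes "\<forall>x. a \<le> x \<and> x < a + k \<longrightarrow> g (Suc x) \<le> g x + 1" "g a \<le> v" "v < g (a + k)"
  shows "\<exists>d. a \<le> d \<and> d < a + k \<and> g d = v"
  using assms
proof (induction k)
  case 0 then show ?case by simp
next
  case (Suc k)
  show ?case
  proof (cases "v < g (a + k)")
    case True
    have "\<forall>x. a \<le> x \<and> x < a + k \<longrightarrow> g (Suc x) \<le> g x + 1" using Suc.prems(1) by simp
    then obtain d where "a \<le> d \<and> d < a + k \<and> g d = v" using Suc.IH Suc.prems(2) True by blast
    then show ?thesis by (intro exI[of _ d]) simp
  next
    case False
    have "g (a + Suc k) \<le> g (a + k) + 1" using Suc.prems(1)[rule_format, of "a + k"] by simp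
    then have "v = g (a + k)" using False Suc.prems(3) by simp
    then show ?thesis by (intro exI[of _ "a + k"]) simp
  qed
qed

lemma discrete_ivt:
  fixes g :: "nat \<Rightarrow> int"
  assumes "a \<le> e" "\<forall>x. a \<le> x \<and> x < e \<longrightarrow> g (Suc x) \<le> g x + 1" "g a \<le> v" "v < g e"
  shows "\<exists>d. a \<le> d \<and> d < e \<and> g d = v"
  using discrete_ivt0[of a "e - a" g v] assms by simp

lemma chain_mono0:
  fixes g :: "nat \<Rightarrow> int"
  shows "\<forall>d. a \<le> d \<and> d < a + k \<longrightarrow> g d \<le> g (Suc d) \<Longrightarrow> g a \<le> g (a + k)"
proof (induction k)
  case 0 then show ?case by simp
next
  case (Suc k)
  then have "g a \<le> g (a + k)" by simp
  moreover have "g (a + k) \<le> g (Suc (a + k))" using Suc.prems by simp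
  ultimately show ?case by simp
qed

lemma chain_mono:
  fixes g :: "nat \<Rightarrow> int"
  shows "\<forall>d. a \<le> d \<and> d < b \<longrightarrow> g d \<le> g (Suc d) \<Longrightarrow> a \<le> b \<Longrightarrow> g a \<le> g b"
  using chain_mono0[of a "b - a" g] by simp

lemma mono_after0:
  fixes g :: "nat \<Rightarrow> int"
  assumes stp: "\<forall>x. Suc x < N \<longrightarrow> g (Suc x) \<le> g x + 1 \<and> g x \<le> g (Suc x) + 1"
    and con: "\<forall>a c b. a < c \<and> c < b \<and> b < N \<and> g a = g b \<longrightarrow> g c = g a"
    and inc: "g a < g (Suc a)"
  shows "Suc (a + k) < N \<Longrightarrow> \<forall>d. a \<le> d \<and> d \<le> a + k \<longrightarrow> g d \<le> g (Suc d)"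
proof (induction k)
  case 0 then show ?case using inc by (auto intro: le_antisym)
next
  case (Suc k)
  define c where "c = a + k"
  have NN: "Suc (Suc c) < N" using Suc.prems unfolding c_def by simp
  have IH: "\<forall>d. a \<le> d \<and> d \<le> c \<longrightarrow> g d \<le> g (Suc d)" using Suc.IH NN unfolding c_def by simp
  have "g (Suc c) \<le> g (Suc (Suc c))"
  proof (rule ccontr)
    assume "\<not> ?thesis"
    then have e: "g (Suc (Suc c)) = g (Suc c) - 1" using stp NN by force
    have "g (Suc a) \<le> g (Suc c)"
      by (rule chain_mono) (use IH c_def in auto)
    then have lt: "g a < g (Suc c)" using inc by simp
    have st: "\<forall>x. a \<le> x \<and> x < Suc c \<longrightarrow> g (Suc x) \<le> g x + 1" using stp NN by simp
    obtain d where d: "a \<le> d" "d < Suc c" "g d = g (Suc c) - 1"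
      using discrete_ivt[of a "Suc c" g "g (Suc c) - 1", OF _ st] lt c_def by auto
    have "g (Suc c) = g d" using con[rule_format, of d "Suc c" "Suc (Suc c)"] d NN e by simp
    then show False using d by simp
  qed
  then show ?case using IH unfolding c_def by (metis add_Suc_right le_SucE)
qed

lemma mono_after:
  fixes g :: "nat \<Rightarrow> int"
  assumes stp: "\<forall>x. Suc x < N \<longrightarrow> g (Suc x) \<le> g x + 1 \<and> g x \<le> g (Suc x) + 1"
    and con: "\<forall>a c b. a < c \<and> c < b \<and> b < N \<and> g a = g b \<longrightarrow> g c = g a"
    and inc: "g a < g (Suc a)"
  shows "a \<le> c \<Longrightarrow> Suc c < N \<Longrightarrow> g c \<le> g (Suc c)"
  using mono_after0[OF stp con inc, of "c - a"] by simp

lemma mono_after_dual: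
  fixes g :: "nat \<Rightarrow> int"
  assumes stp: "\<forall>x. Suc x < N \<longrightarrow> g (Suc x) \<le> g x + 1 \<and> g x \<le> g (Suc x) + 1"
    and con: "\<forall>a c b. a < c \<and> c < b \<and> b < N \<and> g a = g b \<longrightarrow> g c = g a"
    and dec: "g (Suc a) < g a"
    and ac: "a \<le> c" and cN: "Suc c < N"
  shows "g (Suc c) \<le> g c"
proof -
  define h where "h x = - g x" for x
  have stp': "\<forall>x. Suc x < N \<longrightarrow> h (Suc x) \<le> h x + 1 \<and> h x \<le> h (Suc x) + 1"
  proof (intro allI impI)
    fix x assume "Suc x < N"
    then have "g (Suc x) \<le> g x + 1" "g x \<le> g (Suc x) + 1" using stp by auto
    then show "h (Suc x) \<le> h x + 1 \<and> h x \<le> h (Suc x) + 1" unfolding h_def by linarith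
  qed
  have con': "\<forall>a c b. a < c \<and> c < b \<and> b < N \<and> h a = h b \<longrightarrow> h c = h a"
  proof (intro allI impI)
    fix a c b assume hh: "a < c \<and> c < b \<and> b < N \<and> h a = h b"
    then have "g a = g b" unfolding h_def by simp
    then have "g c = g a" using con hh by blast
    then show "h c = h a" unfolding h_def by simp
  qed
  have dec': "h a < h (Suc a)" using dec unfolding h_def by simp
  have "h c \<le> h (Suc c)" using mono_after[OF stp' con' dec' ac cN] .
  then show ?thesis unfolding h_def by simp
qed

lemma mono_or_anti:
  fixes g :: "nat \<Rightarrow> int"
  assumes stp: "\<forall>x. Suc x < N \<longrightarrow> g (Suc x) \<le> g x + 1 \<and> g x \<le> g (Suc x) + 1"
    and con: "\<forall>a c b. a < c \<and> c < b \<and> b < N \<and> g a = g b \<longrightarrow> g c = g a"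
  shows "(\<forall>a. Suc a < N \<longrightarrow> g a \<le> g (Suc a)) \<or> (\<forall>a. Suc a < N \<longrightarrow> g (Suc a) \<le> g a)"
proof (rule ccontr)
  assume "\<not> ?thesis"
  then have n1: "\<not> (\<forall>a. Suc a < N \<longrightarrow> g a \<le> g (Suc a))"
    and n2: "\<not> (\<forall>a. Suc a < N \<longrightarrow> g (Suc a) \<le> g a)" by blast+
  from n1 obtain a where a: "Suc a < N" "g (Suc a) < g a" by (auto simp: not_le)
  from n2 obtain b where b: "Suc b < N" "g b < g (Suc b)" by (auto simp: not_le)
  show False
  proof (cases "b < a")
    case True
    have "g a \<le> g (Suc a)" using mono_after[OF stp con b(2)] True a by simp
    then show False using a by simp
  next
    case False
    have "a \<noteq> b" using a(2) b(2) by auto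
    then have "a \<le> b" using False by simp
    have "g (Suc b) \<le> g b" using mono_after_dual[OF stp con a(2) \<open>a \<le> b\<close> b(1)] .
    then show False using b by simp
  qed
qed

lemma contig_split:
  assumes "\<forall>i k j. i < k \<and> k < j \<and> j < length L \<and> P (L ! i) \<and> P (L ! j) \<longrightarrow> P (L ! k)"
  shows "\<exists>xs ys zs. L = xs @ ys @ zs \<and> (\<forall>x\<in>set xs. \<not> P x) \<and> (\<forall>x\<in>set ys. P x) \<and> (\<forall>x\<in>set zs. \<not> P x)"
  using assms
proof (induction L)
  case Nil then show ?case by auto
next
  case (Cons x L)
  have "\<forall>i k j. i < k \<and> k < j \<and> j < length L \<and> P (L ! i) \<and> P (L ! j) \<longrightarrow> P (L ! k)"
  proof (intro allI impI)
    fix i k j assume "i < k \<and> k < j \<and> j < length L \<and> P (L ! i) \<and> P (L ! j)"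
    then show "P (L ! k)" using Cons.prems[rule_format, of "Suc i" "Suc k" "Suc j"] by simp
  qed
  then obtain xs ys zs where L: "L = xs @ ys @ zs" "\<forall>x\<in>set xs. \<not> P x" "\<forall>x\<in>set ys. P x" "\<forall>x\<in>set zs. \<not> P x"
    using Cons.IH by blast
  show ?case
  proof (cases "P x")
    case False then show ?thesis using L by (metis append_Cons set_ConsD)
  next
    case True
    show ?thesis
    proof (cases "xs = []")
      case True then show ?thesis using L \<open>P x\<close> by (metis append_Cons append_Nil set_ConsD)
    next
      case xs: False
      show ?thesis
      proof (cases "ys = []")
        case True
        then show ?thesis using L \<open>P x\<close>
          by (intro exI[of _ "[]"] exI[of _ "[x]"] exI[of _ L]) auto
      next
        case False
        have "P ((x # L) ! (Suc (length xs)))" using L False by (simp add: nth_append)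
        moreover have "\<not> P ((x # L) ! 1)" using L xs by (cases xs) auto
        moreover have "Suc (length xs) < length (x # L)" using L False by simp
        moreover have "1 < Suc (length xs)" using xs by (cases xs) auto
        ultimately have False using Cons.prems[rule_format, of 0 1 "Suc (length xs)"] \<open>P x\<close> by auto
        then show ?thesis ..
      qed
    qed
  qed
qed

lemma contig_filter:
  assumes "\<forall>i k j. i < k \<and> k < j \<and> j < length L \<and> P (L ! i) \<and> P (L ! j) \<longrightarrow> P (L ! k)"
  shows "\<exists>xs zs. L = xs @ filter P L @ zs"
proof -
  obtain xs ys zs where "L = xs @ ys @ zs" "\<forall>x\<in>set xs. \<not> P x" "\<forall>x\<in>set ys. P x" "\<forall>x\<in>set zs. \<not> P x"
    using contig_split[OF assms] by blast
  then have "filter P L = ys" by simp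
  then show ?thesis using \<open>L = xs @ ys @ zs\<close> by blast
qed

lemma sorted_split_last:
  assumes "sorted (map f xs)" "\<forall>x\<in>set xs. f x \<le> (m::nat)"
  shows "xs = filter (\<lambda>x. f x < m) xs @ filter (\<lambda>x. f x = m) xs"
  using assms
proof (induction xs)
  case Nil then show ?case by simp
next
  case (Cons x xs)
  show ?case
  proof (cases "f x < m")
    case True then show ?thesis using Cons by auto
  next
    case False
    then have "f x = m" using Cons by auto
    moreover have "\<forall>y\<in>set xs. f y = m" using Cons.prems \<open>f x = m\<close> by fastforce
    ultimately show ?thesis by simp
  qed
qed

lemma sorted_concat:
  assumes "sorted (map f xs)" "\<forall>x\<in>set xs. f x \<le> (l::nat)"
  shows "xs = concat (map (\<lambda>i. filter (\<lambda>x. f x = i) xs) [0..<Suc l])"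
  using assms
proof (induction l arbitrary: xs)
  case 0
  then have "filter (\<lambda>x. f x = 0) xs = xs" by auto
  then show ?case by simp
next
  case (Suc l)
  let ?ys = "filter (\<lambda>x. f x < Suc l) xs"
  have s: "sorted (map f ?ys)" using Suc.prems(1)
    by (simp add: sorted_filter)
  have "?ys = concat (map (\<lambda>i. filter (\<lambda>x. f x = i) ?ys) [0..<Suc l])"
  proof -
    have b: "\<forall>x\<in>set ?ys. f x \<le> l" by auto
    show ?thesis by (rule Suc.IH[OF s b])
  qed
  also have "\<dots> = concat (map (\<lambda>i. filter (\<lambda>x. f x = i) xs) [0..<Suc l])"
    by (intro arg_cong[where f=concat] map_cong) (auto simp: filter_filter intro!: filter_cong)
  finally have "xs = concat (map (\<lambda>i. filter (\<lambda>x. f x = i) xs) [0..<Suc l]) @ filter (\<lambda>x. f x = Suc l) xs"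
    using sorted_split_last[OF Suc.prems] by simp
  then show ?case by simp
qed

lemma sp_sublist: "suffix_partitioned (xs @ ys @ zs) \<Longrightarrow> suffix_partitioned ys"
  unfolding suffix_partitioned_def
proof (intro allI impI)
  fix s i j k
  assume h: "\<forall>s i j k. i < k \<and> k < j \<and> j < length (xs @ ys @ zs) \<and>
        suffix s ((xs @ ys @ zs) ! i) \<and> suffix s ((xs @ ys @ zs) ! j) \<longrightarrow> suffix s ((xs @ ys @ zs) ! k)"
    and a: "i < k \<and> k < j \<and> j < length ys \<and> suffix s (ys ! i) \<and> suffix s (ys ! j)"
  show "suffix s (ys ! k)"
    using h[rule_format, of "length xs + i" "length xs + k" "length xs + j" s] a
    by (simp add: nth_append)
qed

lemma sp_map_app: "suffix_partitioned (map (\<lambda>p. p @ t) M) \<Longrightarrow> suffix_partitioned M"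
  unfolding suffix_partitioned_def
proof (intro allI impI)
  fix s i j k
  assume h: "\<forall>s i j k. i < k \<and> k < j \<and> j < length (map (\<lambda>p. p @ t) M) \<and>
        suffix s (map (\<lambda>p. p @ t) M ! i) \<and> suffix s (map (\<lambda>p. p @ t) M ! j) \<longrightarrow> suffix s (map (\<lambda>p. p @ t) M ! k)"
    and a: "i < k \<and> k < j \<and> j < length M \<and> suffix s (M ! i) \<and> suffix s (M ! j)"
  show "suffix s (M ! k)"
    using h[rule_format, of i k j "s @ t"] a by simp
qed

lemma hom_transp_cancel:
  assumes h: "hom_transp (p @ t) (q @ t)" shows "hom_transp p q"
proof -
  have lq: "length q = length p" using hom_transp_length[OF h] by simp
  from h obtain i j where *: "i < j" "j < length (p @ t)" "(p @ t) ! i \<noteq> (p @ t) ! j"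
    "\<forall>k. i < k \<and> k < j \<longrightarrow> \<not> (p @ t) ! k" "q @ t = (p @ t)[i := (p @ t) ! j, j := (p @ t) ! i]"
    unfolding hom_transp_def by blast
  have jp: "j < length p"
  proof (rule ccontr)
    assume "\<not> j < length p"
    then have "(q @ t) ! j = (p @ t) ! j" using lq by (simp add: nth_append)
    moreover have "(q @ t) ! j = (p @ t) ! i" using * by simp
    ultimately show False using * by simp
  qed
  have "q @ t = p[i := p ! j, j := p ! i] @ t" using * jp by (simp add: nth_append list_update_append)
  then have q: "q = p[i := p ! j, j := p ! i]" by simp
  show ?thesis unfolding hom_transp_def
    apply (rule exI[of _ i], rule exI[of _ j])
    using * jp q by (simp add: nth_append)
qed

lemma rev_upt_Suc: "rev [0..<Suc n] = map (\<lambda>i. n - i) [0..<Suc n]"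
  by (rule nth_equalityI) (auto simp: rev_nth simp del: upt_Suc)

lemma all_zero:
  assumes len: "\<forall>w\<in>set L. length w = n" and sc: "successively hom_transp L" and two: "\<not> length L \<le> 1"
  shows "\<forall>w\<in>set L. tl1 w < n"
proof
  fix w assume w: "w \<in> set L"
  then obtain a where a: "a < length L" "w = L ! a" by (auto simp: in_set_conv_nth)
  have "False \<in> set w"
  proof (cases "Suc a < length L")
    case True
    have "hom_transp (L ! a) (L ! Suc a)" using successively_nth[OF sc True] .
    then show ?thesis using hom_transp_zero a(2) by simp
  next
    case F: False
    have s: "Suc (a - 1) < length L" "Suc (a - 1) = a" using a(1) two F by auto
    have "hom_transp (L ! (a - 1)) (L ! Suc (a - 1))" using successively_nth[OF sc s(1)] .
    then have "hom_transp (L ! a) (L ! (a - 1))" using hom_transp_sym s(2) by simp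
    then show ?thesis using hom_transp_zero a(2) by simp
  qed
  then have "tl1 w < length w" using tl1_less_iff by simp
  then show "tl1 w < n" using len w by simp
qed

lemma inner_props:
  assumes len: "\<forall>w\<in>set L. length w = n" and sc: "successively hom_transp L"
    and sp: "suffix_partitioned L" and all0: "\<forall>w\<in>set L. tl1 w < n"
  shows "successively hom_transp (map (take (n - Suc v)) (filter (\<lambda>w. tl1 w = v) L))
    \<and> suffix_partitioned (map (take (n - Suc v)) (filter (\<lambda>w. tl1 w = v) L))
    \<and> (\<forall>w\<in>set (map (take (n - Suc v)) (filter (\<lambda>w. tl1 w = v) L)). length w = n - Suc v)"
proof -
  let ?ys = "filter (\<lambda>w. tl1 w = v) L"
  let ?M = "map (take (n - Suc v)) ?ys"
  have sfx: "suffix (tail_word v) w \<longleftrightarrow> tl1 w = v" if "w \<in> set L" for w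
    using suffix_tail_iff[of v w] all0 len that by auto
  have "\<forall>i k j. i < k \<and> k < j \<and> j < length L \<and> tl1 (L ! i) = v \<and> tl1 (L ! j) = v \<longrightarrow> tl1 (L ! k) = v"
  proof (intro allI impI)
    fix i k j assume h: "i < k \<and> k < j \<and> j < length L \<and> tl1 (L ! i) = v \<and> tl1 (L ! j) = v"
    then have "L ! i \<in> set L" "L ! j \<in> set L" "L ! k \<in> set L" by auto
    then have "suffix (tail_word v) (L ! i)" "suffix (tail_word v) (L ! j)" using sfx h by auto
    then have "suffix (tail_word v) (L ! k)" using sp h unfolding suffix_partitioned_def by blast
    then show "tl1 (L ! k) = v" using sfx \<open>L ! k \<in> set L\<close> by simp
  qed
  from contig_filter[OF this] obtain xs zs where L: "L = xs @ ?ys @ zs" by blast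
  have scy: "successively hom_transp ?ys" using sc L successively_append_iff[of hom_transp xs "?ys @ zs"]
    successively_append_iff[of hom_transp ?ys zs] by simp
  have spy: "suffix_partitioned ?ys" using sp_sublist[of xs ?ys zs] sp L by simp
  have ys: "?ys = map (\<lambda>p. p @ tail_word v) ?M"
  proof -
    have "take (n - Suc v) w @ tail_word v = w" if "w \<in> set ?ys" for w
    proof -
      have w: "w \<in> set L" "tl1 w = v" using that by auto
      then have "v < length w" "length w = n" using all0 len by auto
      then show ?thesis using tl1_decomp2[of w] w(2) by simp
    qed
    then have "map (\<lambda>w. take (n - Suc v) w @ tail_word v) ?ys = ?ys" by (intro map_idI) simp
    then show ?thesis by (simp add: o_def)
  qed
  have "successively (\<lambda>x y. hom_transp (x @ tail_word v) (y @ tail_word v)) ?M"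
    using scy ys successively_map[of hom_transp "\<lambda>p. p @ tail_word v" ?M] by simp
  then have "successively hom_transp ?M"
    using successively_mono[of _ ?M hom_transp] hom_transp_cancel by blast
  moreover have "suffix_partitioned ?M" using spy ys sp_map_app[of "tail_word v" ?M] by simp
  moreover have "\<forall>w\<in>set ?M. length w = n - Suc v" using len by auto
  ultimately show ?thesis by blast
qed

lemma app_filter:
  assumes len: "\<forall>w\<in>set L. length w = n" and all0: "\<forall>w\<in>set L. tl1 w < n"
  shows "app_word (map (take (n - Suc v)) (filter (\<lambda>w. tl1 w = v) L)) (tail_word v)
         = filter (\<lambda>w. tl1 w = v) L"
proof -
  have "take (n - Suc v) w @ tail_word v = w" if "w \<in> set (filter (\<lambda>w. tl1 w = v) L)" for w
  proof -
    have w: "w \<in> set L" "tl1 w = v" using that by auto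
    then have "v < length w" "length w = n" using all0 len by auto
    then show ?thesis using tl1_decomp2[of w] w(2) by simp
  qed
  then have "map (\<lambda>w. take (n - Suc v) w @ tail_word v) (filter (\<lambda>w. tl1 w = v) L)
     = filter (\<lambda>w. tl1 w = v) L" by (intro map_idI) simp
  then show ?thesis unfolding app_word_def by (simp add: o_def)
qed

lemma main:
  "\<forall>w\<in>set L. length w = n \<Longrightarrow> successively hom_transp L \<Longrightarrow> suffix_partitioned L \<Longrightarrow> rec_tail_part L"
proof (induction n arbitrary: L rule: less_induct)
  case (less n L)
  have len: "\<forall>w\<in>set L. length w = n" and sc: "successively hom_transp L"
    and sp: "suffix_partitioned L" using less.prems by auto
  show ?case
  proof (cases "length L \<le> 1")
    case True
    then show ?thesis
    proof (cases L)
      case Nil then show ?thesis by (simp add: rtp_nil)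
    next
      case (Cons a L') then have "L = [a]" using True by simp
      then show ?thesis by (simp add: rtp_single)
    qed
  next
    case False
    have all0: "\<forall>w\<in>set L. tl1 w < n" using all_zero[OF len sc False] .
    have sfx: "suffix (tail_word v) w \<longleftrightarrow> tl1 w = v" if "w \<in> set L" for w v
      using suffix_tail_iff[of v w] all0 len that by auto
    define g where "g a = int (tl1 (L ! a))" for a
    have stp: "\<forall>x. Suc x < length L \<longrightarrow> g (Suc x) \<le> g x + 1 \<and> g x \<le> g (Suc x) + 1"
    proof (intro allI impI)
      fix x assume x: "Suc x < length L"
      have h: "hom_transp (L ! x) (L ! Suc x)" using successively_nth[OF sc x] .
      have "tl1 (L ! Suc x) \<le> tl1 (L ! x) + 1" using hom_transp_step[OF h] .
      moreover have "tl1 (L ! x) \<le> tl1 (L ! Suc x) + 1" using hom_transp_step[OF hom_transp_sym[OF h]] .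
      ultimately show "g (Suc x) \<le> g x + 1 \<and> g x \<le> g (Suc x) + 1" unfolding g_def by simp
    qed
    have con: "\<forall>a c b. a < c \<and> c < b \<and> b < length L \<and> g a = g b \<longrightarrow> g c = g a"
    proof (intro allI impI)
      fix a c b assume h: "a < c \<and> c < b \<and> b < length L \<and> g a = g b"
      let ?v = "tl1 (L ! a)"
      have m: "L ! a \<in> set L" "L ! b \<in> set L" "L ! c \<in> set L" using h by auto
      have "tl1 (L ! b) = ?v" using h unfolding g_def by simp
      then have "suffix (tail_word ?v) (L ! a)" "suffix (tail_word ?v) (L ! b)"
        using sfx[OF m(1)] sfx[OF m(2)] by auto
      then have "suffix (tail_word ?v) (L ! c)"
        using sp h unfolding suffix_partitioned_def by blast
      then show "g c = g a" using sfx[OF m(3)] unfolding g_def by simp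
    qed
    have recs: "rec_tail_part (map (take (n - Suc v)) (filter (\<lambda>w. tl1 w = v) L))" for v
    proof (cases "filter (\<lambda>w. tl1 w = v) L = []")
      case True then show ?thesis by (simp add: rtp_nil)
    next
      case False
      then obtain w where "w \<in> set L" "tl1 w = v" by (auto simp: filter_empty_conv)
      then have vn: "v < n" using all0 by auto
      have P: "successively hom_transp (map (take (n - Suc v)) (filter (\<lambda>w. tl1 w = v) L))
        \<and> suffix_partitioned (map (take (n - Suc v)) (filter (\<lambda>w. tl1 w = v) L))
        \<and> (\<forall>w\<in>set (map (take (n - Suc v)) (filter (\<lambda>w. tl1 w = v) L)). length w = n - Suc v)"
        using inner_props[OF len sc sp all0] .
      have "n - Suc v < n" using vn by simp
      then show ?thesis using less.IH P by blast
    qed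
    have lens: "\<forall>w\<in>set L. \<forall>w'\<in>set L. length w = length w'" using len by simp
    have bnd: "\<forall>x\<in>set L. tl1 x \<le> n" using all0 by (simp add: less_imp_le)
    have app: "\<And>v. app_word (map (take (n - Suc v)) (filter (\<lambda>w. tl1 w = v) L)) (tail_word v)
         = filter (\<lambda>w. tl1 w = v) L" using app_filter[OF len all0] .
    from mono_or_anti[OF stp con] show ?thesis
    proof
      assume inc: "\<forall>a. Suc a < length L \<longrightarrow> g a \<le> g (Suc a)"
      have "sorted (map tl1 L)" unfolding sorted_iff_nth_Suc
      proof (intro allI impI)
        fix i assume "Suc i < length (map tl1 L)"
        then show "map tl1 L ! i \<le> map tl1 L ! Suc i" using inc unfolding g_def by simp
      qed
      then have L: "L = concat (map (\<lambda>i. filter (\<lambda>x. tl1 x = i) L) [0..<Suc n])"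
        using sorted_concat[of tl1 L n] bnd by simp
      define Ls where "Ls = map (\<lambda>i. map (take (n - Suc i)) (filter (\<lambda>w. tl1 w = i) L)) [0..<Suc n]"
      have lLs: "length Ls = Suc n" unfolding Ls_def by simp
      have rLs: "\<forall>i<length Ls. rec_tail_part (Ls ! i)"
      proof (intro allI impI)
        fix i assume "i < length Ls"
        then have "Ls ! i = map (take (n - Suc i)) (filter (\<lambda>w. tl1 w = i) L)"
          unfolding Ls_def by (simp del: upt_Suc)
        then show "rec_tail_part (Ls ! i)" using recs by simp
      qed
      have eL: "L = concat (map (\<lambda>i. app_word (Ls ! i) (tail_word (0 + i))) [0..<Suc n])"
      proof -
        have "map (\<lambda>i. app_word (Ls ! i) (tail_word (0 + i))) [0..<Suc n]
            = map (\<lambda>i. filter (\<lambda>x. tl1 x = i) L) [0..<Suc n]"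
        proof (rule map_cong[OF refl])
          fix i assume "i \<in> set [0..<Suc n]"
          then have "i < Suc n" by (simp del: upt_Suc)
          then have "Ls ! i = map (take (n - Suc i)) (filter (\<lambda>w. tl1 w = i) L)"
            unfolding Ls_def by (simp del: upt_Suc)
          then show "app_word (Ls ! i) (tail_word (0 + i)) = filter (\<lambda>x. tl1 x = i) L"
            using app[of i] by simp
        qed
        note eq = this
        show ?thesis unfolding eq by (rule L)
      qed
      show ?thesis using rtp_inc[OF lLs rLs eL lens] .
    next
      assume dec: "\<forall>a. Suc a < length L \<longrightarrow> g (Suc a) \<le> g a"
      have "sorted (map tl1 (rev L))" unfolding rev_map[symmetric] sorted_rev_iff_nth_Suc
      proof (intro allI impI)
        fix i assume "Suc i < length (map tl1 L)"
        then show "map tl1 L ! Suc i \<le> map tl1 L ! i" using dec unfolding g_def by simp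
      qed
      then have "rev L = concat (map (\<lambda>i. filter (\<lambda>x. tl1 x = i) (rev L)) [0..<Suc n])"
        using sorted_concat[of tl1 "rev L" n] bnd by simp
      then have "L = rev (concat (map (\<lambda>i. filter (\<lambda>x. tl1 x = i) (rev L)) [0..<Suc n]))"
        by (metis rev_rev_ident)
      also have "\<dots> = concat (map (\<lambda>i. filter (\<lambda>x. tl1 x = i) L) (rev [0..<Suc n]))"
        by (simp add: rev_concat rev_map rev_filter o_def del: upt_Suc)
      also have "\<dots> = concat (map (\<lambda>i. filter (\<lambda>x. tl1 x = n - i) L) [0..<Suc n])"
        by (simp only: rev_upt_Suc map_map o_def)
      finally have L: "L = concat (map (\<lambda>i. filter (\<lambda>x. tl1 x = n - i) L) [0..<Suc n])" .
      define Ls where "Ls = map (\<lambda>i. map (take (n - Suc (n - i))) (filter (\<lambda>w. tl1 w = n - i) L)) [0..<Suc n]"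
      have lLs: "length Ls = Suc n" unfolding Ls_def by simp
      have rLs: "\<forall>i<length Ls. rec_tail_part (Ls ! i)"
      proof (intro allI impI)
        fix i assume "i < length Ls"
        then have "Ls ! i = map (take (n - Suc (n - i))) (filter (\<lambda>w. tl1 w = n - i) L)"
          unfolding Ls_def by (simp del: upt_Suc)
        then show "rec_tail_part (Ls ! i)" using recs by simp
      qed
      have eL: "L = concat (map (\<lambda>i. app_word (Ls ! i) (tail_word (0 + n - i))) [0..<Suc n])"
      proof -
        have "map (\<lambda>i. app_word (Ls ! i) (tail_word (0 + n - i))) [0..<Suc n]
            = map (\<lambda>i. filter (\<lambda>x. tl1 x = n - i) L) [0..<Suc n]"
        proof (rule map_cong[OF refl])
          fix i assume "i \<in> set [0..<Suc n]"
          then have "i < Suc n" by (simp del: upt_Suc)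
          then have "Ls ! i = map (take (n - Suc (n - i))) (filter (\<lambda>w. tl1 w = n - i) L)"
            unfolding Ls_def by (simp del: upt_Suc)
          then show "app_word (Ls ! i) (tail_word (0 + n - i)) = filter (\<lambda>x. tl1 x = n - i) L"
            using app[of "n - i"] by simp
        qed
        note eq = this
        show ?thesis unfolding eq by (rule L)
      qed
      show ?thesis using rtp_dec[OF lLs rLs eL lens] .
    qed
  qed
qed

theorem theorem1:
  fixes S :: "word set" and L :: "word list" and n k :: nat
  assumes "\<forall>w \<in> S. length w = n"
    and "\<forall>w \<in> S. weight w = k"
    and "hom_gray_code L S"
    and "suffix_partitioned L"
  shows "rec_tail_part L"
proof -
  have l: "\<forall>w\<in>set L. length w = n" using assms(1,3) unfolding hom_gray_code_def by simp
  have s: "successively hom_transp L" using assms(3)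
    unfolding hom_gray_code_def successively_conv_nth by simp
  show ?thesis by (rule main[OF l s assms(4)])
qed

end
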